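(* Let $2\le r<s<k$ and let $H$ be a full $(s,s-r)$-starplus on $k$ vertices with excess $\lambda$ satisfying $$\lambda\le\frac{r\binom{k-s+r}{r}-(k-s+r)}{k-s}.$$ Then $H$ is $r$-balanced: every sub-hypergraph $H'\subseteq H$ with at least $s$ vertices satisfies $f^{(r)}(H')\le f^{(r)}(H)$.
   Context: A full $(s,c)$-starplus on $k$ vertices with excess $\lambda$ ($1\le c<s<k$) is an $s$-uniform hypergraph on a $k$-element vertex set $V$ with a distinguished $c$-set $C\subseteq V$, whose edge set is the edge-disjoint union of all $\binom{k-c}{s-c}$ $s$-subsets of $V$ containing $C$ and of $\lambda$ further $s$-subsets of $V$ not containing $C$. For an $s$-graph $H$ with $v_H$ vertices and $e_H$ edges, $f^{(r)}(H)=\frac{e_H}{v_H-s+r}$. *)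

theory Defs
  imports Complex_Main
begin

definition f_r :: "nat \<Rightarrow> nat \<Rightarrow> 'a set \<Rightarrow> 'a set set \<Rightarrow> real" where
  "f_r r s V E = real (card E) / (real (card V) - real s + real r)"

definition full_starplus ::
  "nat \<Rightarrow> nat \<Rightarrow> nat \<Rightarrow> nat \<Rightarrow> 'a set \<Rightarrow> 'a set \<Rightarrow> 'a set set \<Rightarrow> bool" where
  "full_starplus s c k lam V C E \<longleftrightarrow>
     1 \<le> c \<and> c < s \<and> s < k \<and> finite V \<and> card V = k \<and> C \<subseteq> V \<and> card C = c \<and>
     (\<exists>L. L \<subseteq> {e. e \<subseteq> V \<and> card e = s \<and> \<not> C \<subseteq> e} \<and> card L = lam \<and>
          E = {e. e \<subseteq> V \<and> card e = s \<and> C \<subseteq> e} \<union> L)"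

definition r_balanced :: "nat \<Rightarrow> nat \<Rightarrow> 'a set \<Rightarrow> 'a set set \<Rightarrow> bool" where
  "r_balanced r s V E \<longleftrightarrow>
     (\<forall>V' E'. V' \<subseteq> V \<and> E' \<subseteq> E \<and> (\<forall>e\<in>E'. e \<subseteq> V') \<and> s \<le> card V'
        \<longrightarrow> f_r r s V' E' \<le> f_r r s V E)"

end

theory Submission imports Defs begin
lemma binom_aux: "(Suc q + a) choose Suc q \<le> 1 + a * ((q + a) choose q)"
proof (induction a)
  case 0 then show ?case by simp
next
  case (Suc a)
  define X where "X = (Suc q + a) choose Suc q"
  define A where "A = (q + a) choose q"
  define B where "B = (q + Suc a) choose q"
  have e: "(Suc q + Suc a) choose Suc q = B + X"
    unfolding X_def B_def by (metis add_Suc_right add_Suc binomial_Suc_Suc)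
  have m: "A \<le> B" unfolding A_def B_def by (rule binomial_right_mono) simp
  have i: "X \<le> 1 + a * A" using Suc.IH unfolding X_def A_def .
  have m2: "a * A \<le> a * B" using m by (rule mult_le_mono2)
  have "Suc a * B = B + a * B" by simp
  then have "B + X \<le> 1 + Suc a * B" using i m2 by linarith
  then show ?case using e unfolding B_def by simp
qed

lemma chord: "(a+b) * ((Suc q+a) choose Suc q) \<le> b + a * ((Suc q+a+b) choose Suc q)"
proof (induction b)
  case 0 then show ?case by simp
next
  case (Suc b)
  define X where "X = (Suc q + a) choose Suc q"
  define A where "A = (q + a) choose q"
  define Y where "Y = (Suc q + a + b) choose q"
  define Z where "Z = (Suc q + a + b) choose Suc q"
  have e: "(Suc q + a + Suc b) choose Suc q = Y + Z"
    unfolding Y_def Z_def by (metis add_Suc_right binomial_Suc_Suc)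
  have m: "A \<le> Y" unfolding A_def Y_def by (rule binomial_right_mono) simp
  have m2: "a * A \<le> a * Y" using m by (rule mult_le_mono2)
  have i: "X \<le> 1 + a * A" unfolding X_def A_def by (rule binom_aux)
  have ih: "(a+b) * X \<le> b + a * Z" using Suc.IH unfolding X_def Z_def .
  have "(a + Suc b) * X \<le> Suc b + a * (Y + Z)"
    using m2 i ih mult_Suc[of b X] by (simp only: add_mult_distrib add_mult_distrib2)
  then show ?case using e unfolding X_def by simp
qed

lemma key:
  fixes m n r M N l :: real
  assumes "r < m" "r \<le> n" "n \<le> m" "0 \<le> l" "(m-r)*N \<le> (m-n)+(n-r)*M"
    "l*(m-r) \<le> r*M - m" "m>0" "n>0"
  shows "(N+l)/n \<le> (M+l)/m"
proof -
  have h1: "m*((m-r)*N) \<le> m*((m-n)+(n-r)*M)" using assms by (intro mult_left_mono) auto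
  have h2: "(m-n)*(l*(m-r)) \<le> (m-n)*(r*M - m)" using assms by (intro mult_left_mono) auto
  have "(m-r)*(m*(N+l)) \<le> (m-r)*(n*(M+l))"
    using h1 h2 by (simp add: algebra_simps)
  then have "m*(N+l) \<le> n*(M+l)" using assms by simp
  then show ?thesis using assms by (simp add: divide_simps mult.commute)
qed

lemma star_card:
  assumes "finite W" "C \<subseteq> W" "card C \<le> s"
  shows "card {e. e \<subseteq> W \<and> card e = s \<and> C \<subseteq> e} = card (W - C) choose (s - card C)"
proof -
  have fC: "finite C" using assms finite_subset by blast
  have "bij_betw (\<lambda>e. e - C) {e. e \<subseteq> W \<and> card e = s \<and> C \<subseteq> e} {B. B \<subseteq> W - C \<and> card B = s - card C}"
  proof (rule bij_betw_byWitness[where f'="\<lambda>B. B \<union> C"])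
    show "\<forall>a\<in>{e. e \<subseteq> W \<and> card e = s \<and> C \<subseteq> e}. a - C \<union> C = a" by auto
    show "\<forall>a'\<in>{B. B \<subseteq> W - C \<and> card B = s - card C}. a' \<union> C - C = a'" by auto
    show "(\<lambda>e. e - C) ` {e. e \<subseteq> W \<and> card e = s \<and> C \<subseteq> e} \<subseteq> {B. B \<subseteq> W - C \<and> card B = s - card C}"
      using fC by (auto simp: card_Diff_subset)
    show "(\<lambda>B. B \<union> C) ` {B. B \<subseteq> W - C \<and> card B = s - card C} \<subseteq> {e. e \<subseteq> W \<and> card e = s \<and> C \<subseteq> e}"
    proof clarify
      fix B assume B: "B \<subseteq> W - C" "card (B) = s - card C"
      have "finite B" using B assms finite_subset by blast
      then have "card (B \<union> C) = card B + card C" using B fC by (intro card_Un_disjoint) auto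
      then show "B \<union> C \<subseteq> W \<and> card (B \<union> C) = s \<and> C \<subseteq> B \<union> C" using B assms by auto
    qed
  qed
  then have "card {e. e \<subseteq> W \<and> card e = s \<and> C \<subseteq> e} = card {B. B \<subseteq> W - C \<and> card B = s - card C}"
    by (rule bij_betw_same_card)
  also have "\<dots> = card (W - C) choose (s - card C)" using assms by (intro n_subsets) auto
  finally show ?thesis .
qed

theorem proposition18:
  fixes r s k lam :: nat and V C :: "'a set" and E :: "'a set set"
  assumes "2 \<le> r" and "r < s" and "s < k"
    and "full_starplus s (s - r) k lam V C E"
    and "real lam \<le> (real r * real ((k - s + r) choose r) - real (k - s + r)) / real (k - s)"
  shows "r_balanced r s V E"
proof -
  let ?S = "\<lambda>W. {e. e \<subseteq> W \<and> card e = s \<and> C \<subseteq> e}"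
  from assms(4) obtain L where fV: "finite V" and cV: "card V = k" and CV: "C \<subseteq> V"
    and cC: "card C = s - r" and L: "L \<subseteq> {e. e \<subseteq> V \<and> card e = s \<and> \<not> C \<subseteq> e}"
    and cL: "card L = lam" and E: "E = ?S V \<union> L"
    unfolding full_starplus_def by blast
  define m where "m = k - s + r"
  define M where "M = m choose r"
  have fC: "finite C" using fV CV finite_subset by blast
  have cVC: "card (V - C) = m" using cV cC CV fC assms(2,3) unfolding m_def
    by (simp add: card_Diff_subset)
  have SV: "card (?S V) = M" unfolding M_def
    using star_card[OF fV CV, of s] cC cVC assms(2) by simp
  have fPow: "finite (Pow V)" using fV by simp
  have fL: "finite L" proof -
    have "L \<subseteq> Pow V" using L by auto
    then show ?thesis using fPow finite_subset by blast
  qed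
  have fS: "\<And>W. W \<subseteq> V \<Longrightarrow> finite (?S W)"
    using fV by (metis (no_types, lifting) finite_Collect_subsets mem_Collect_eq rev_finite_subset subset_iff)
  have disj: "?S V \<inter> L = {}" using L by auto
  have cE: "card E = M + lam" unfolding E using card_Un_disjoint[OF fS[OF order.refl] fL disj] SV cL by simp
  have mr: "r < m" using assms unfolding m_def by simp
  have mpos: "real m > 0" using mr by simp
  have fE: "f_r r s V E = (real M + real lam) / real m"
    unfolding f_r_def cE cV m_def using assms by (simp add: of_nat_diff)
  have ks: "real (k - s) = real m - real r" unfolding m_def using assms by (simp add: of_nat_diff)
  have hyp: "real lam * (real m - real r) \<le> real r * real M - real m"
    using assms(5) ks mr unfolding M_def m_def[symmetric] by (simp add: field_simps)
  show ?thesis unfolding r_balanced_def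
  proof (intro allI impI)
    fix V' E' assume H: "V' \<subseteq> V \<and> E' \<subseteq> E \<and> (\<forall>e\<in>E'. e \<subseteq> V') \<and> s \<le> card V'"
    have fV': "finite V'" using H fV finite_subset by blast
    have cV'k: "card V' \<le> k" using H fV cV card_mono by blast
    show "f_r r s V' E' \<le> f_r r s V E"
    proof (cases "C \<subseteq> V'")
      case True
      define n where "n = card V' - (s - r)"
      have cV'C: "card (V' - C) = n" unfolding n_def using True fC cC by (simp add: card_Diff_subset)
      have rn: "r \<le> n" "n \<le> m" using H cV'k assms unfolding n_def m_def by auto
      have SV': "card (?S V') = n choose r"
        using star_card[OF fV' True, of s] cC cV'C assms(2) by simp
      have "E' \<subseteq> ?S V' \<union> L" using H E by auto
      then have "card E' \<le> card (?S V' \<union> L)"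
        using fS[of V'] fL H by (intro card_mono) auto
      also have "\<dots> \<le> card (?S V') + card L" by (rule card_Un_le)
      finally have cE': "real (card E') \<le> real (n choose r) + real lam" using SV' cL by simp
      have den: "real (card V') - real s + real r = real n" unfolding n_def using H assms
        by (simp add: of_nat_diff)
      have npos: "real n > 0" using rn assms by simp
      obtain q where q: "r = Suc q" using assms(1) by (cases r) auto
      have ch: "((n - r) + (m - n)) * ((Suc q + (n - r)) choose Suc q)
          \<le> (m - n) + (n - r) * ((Suc q + (n - r) + (m - n)) choose Suc q)" by (rule chord)
      have e1: "Suc q + (n - Suc q) = n" "Suc q + (n - Suc q) + (m - n) = m" "(n - Suc q) + (m - n) = m - Suc q"
        using rn q by auto
      have ch2: "(m - r) * (n choose r) \<le> (m - n) + (n - r) * M"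
        using ch rn(2) unfolding q e1 M_def by simp
      have ch3: "(real m - real r) * real (n choose r) \<le> (real m - real n) + (real n - real r) * real M"
        using ch2 rn mr by (metis (no_types, lifting) of_nat_add of_nat_diff of_nat_le_iff of_nat_mult less_imp_le)
      have "f_r r s V' E' = real (card E') / real n" unfolding f_r_def den ..
      also have "\<dots> \<le> (real (n choose r) + real lam) / real n"
        using cE' npos by (simp add: divide_right_mono)
      also have "\<dots> \<le> (real M + real lam) / real m"
        by (rule key) (use rn mr ch3 hyp mpos npos in auto)
      finally show ?thesis using fE by simp
    next
      case False
      have "E' \<subseteq> L"
      proof
        fix e assume e: "e \<in> E'"
        then have "e \<subseteq> V'" "e \<in> E" using H by auto
        then show "e \<in> L" using E False by blast
      qed
      then have cE': "real (card E') \<le> real lam" using fL cL card_mono by (metis of_nat_le_iff)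
      define d where "d = real (card V') - real s + real r"
      have dr: "d \<ge> real r" using H unfolding d_def by simp
      have rpos: "real r > 0" using assms by simp
      have "f_r r s V' E' = real (card E') / d" unfolding f_r_def d_def ..
      also have "\<dots> \<le> real lam / d" using cE' dr rpos by (simp add: divide_right_mono)
      also have "\<dots> \<le> real lam / real r" using dr rpos by (simp add: frac_le)
      also have "\<dots> \<le> (real M + real lam) / real m"
      proof -
        have "real lam * real m \<le> real r * (real M + real lam)" using hyp mpos by (simp add: algebra_simps)
        then show ?thesis using rpos mpos by (simp add: divide_simps mult.commute)
      qed
      finally show ?thesis using fE by simp
    qed
  qed
qed

end
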